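(* Let $p\ge1$ and let $\mathcal A=(A_n)_{n\ge0}$ be a sequence of positive invertible $p\times p$ matrices with $\sup_n\|A_n\|<\infty$ such that the matrix-valued weighted shift $W_{\mathcal A}$ on $\ell^2(\mathbb C^p)$ is quadratically hyponormal. If $A_n=A_{n+1}$ for some $n\ge1$, then $W_{\mathcal A}$ is flat, i.e. $A_k=A_1$ for every $k\ge1$.
   Context: $\ell^2(\mathbb C^p)=\{(x_n)_{n\ge0}: x_n\in\mathbb C^p,\ \sum_n\|x_n\|^2<\infty\}$; the matrix-valued weighted shift is $W_{\mathcal A}(x_0,x_1,\dots)=(0,A_0x_0,A_1x_1,\dots)$. A bounded operator $T$ is hyponormal if $T^*T-TT^*\ge0$, and quadratically hyponormal if $T+\lambda T^2$ is hyponormal for every $\lambda\in\mathbb C$. The shift is flat if $A_k=A_1$ for all $k\ge1$. *)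

theory Defs
  imports "HOL-Analysis.Analysis"
begin

text \<open>Vectors in C^p are modelled as complex^'p with 'p a finite type (so p = CARD('p) >= 1),
  p x p matrices as complex^'p^'p.\<close>

definition cinner :: "complex^'p \<Rightarrow> complex^'p \<Rightarrow> complex" where
  "cinner x y = (\<Sum>i\<in>UNIV. x$i * cnj (y$i))"

definition pos_mat :: "complex^'p^'p \<Rightarrow> bool" where
  "pos_mat A \<longleftrightarrow> (\<forall>x. Im (cinner (A *v x) x) = 0 \<and> Re (cinner (A *v x) x) \<ge> 0)"

definition l2seq :: "(nat \<Rightarrow> complex^'p) \<Rightarrow> bool" where
  "l2seq x \<longleftrightarrow> summable (\<lambda>n. (norm (x n))\<^sup>2)"

definition l2inner :: "(nat \<Rightarrow> complex^'p) \<Rightarrow> (nat \<Rightarrow> complex^'p) \<Rightarrow> complex" where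
  "l2inner x y = (\<Sum>n. cinner (x n) (y n))"

type_synonym ('p) l2op = "(nat \<Rightarrow> complex^'p) \<Rightarrow> (nat \<Rightarrow> complex^'p)"

definition is_adjoint :: "('p::finite) l2op \<Rightarrow> 'p l2op \<Rightarrow> bool" where
  "is_adjoint T S \<longleftrightarrow> (\<forall>x. l2seq x \<longrightarrow> l2seq (S x)) \<and>
     (\<forall>x y. l2seq x \<longrightarrow> l2seq y \<longrightarrow> l2inner (T x) y = l2inner x (S y))"

definition hyponormal :: "('p::finite) l2op \<Rightarrow> bool" where
  "hyponormal T \<longleftrightarrow> (\<forall>x. l2seq x \<longrightarrow> l2seq (T x)) \<and>
     (\<exists>S. is_adjoint T S \<and>
        (\<forall>x. l2seq x \<longrightarrow>
           (let q = l2inner (\<lambda>n. S (T x) n - T (S x) n) x in Im q = 0 \<and> Re q \<ge> 0)))"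

definition quad_hyponormal :: "('p::finite) l2op \<Rightarrow> bool" where
  "quad_hyponormal T \<longleftrightarrow> (\<forall>c::complex. hyponormal (\<lambda>x n. T x n + c *s T (T x) n))"

definition mshift :: "(nat \<Rightarrow> complex^'p^'p) \<Rightarrow> ('p::finite) l2op" where
  "mshift A x = (\<lambda>n. if n = 0 then 0 else A (n - 1) *v x (n - 1))"

end

theory Submission
  imports Defs
begin


definition nsq :: "complex^'p \<Rightarrow> real" where "nsq v = Re (cinner v v)"

definition herm :: "complex^'p^'p \<Rightarrow> bool" where
  "herm M \<longleftrightarrow> (\<forall>x y. cinner (M *v x) y = cinner x (M *v y))"

lemma cinner_add_left: "cinner (x + y) z = cinner x z + cinner y z"
  by (simp add: cinner_def sum.distrib distrib_right)
lemma cinner_add_right: "cinner z (x + y) = cinner z x + cinner z y"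
  by (simp add: cinner_def sum.distrib distrib_left)
lemma cinner_diff_left: "cinner (x - y) z = cinner x z - cinner y z"
  by (simp add: cinner_def sum_subtractf left_diff_distrib)
lemma cinner_diff_right: "cinner z (x - y) = cinner z x - cinner z y"
  by (simp add: cinner_def sum_subtractf right_diff_distrib)
lemma cinner_scale_left: "cinner (c *s x) y = c * cinner x y"
  by (simp add: cinner_def sum_distrib_left mult.assoc)
lemma cinner_scale_right: "cinner x (c *s y) = cnj c * cinner x y"
  by (simp add: cinner_def sum_distrib_left mult_ac)
lemma cinner_zero_left[simp]: "cinner 0 y = 0"
  by (simp add: cinner_def)
lemma cinner_zero_right[simp]: "cinner y 0 = 0"
  by (simp add: cinner_def)
lemma cinner_commute: "cnj (cinner x y) = cinner y x"
  by (simp add: cinner_def mult.commute)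
lemma cinner_self: "cinner x x = complex_of_real (\<Sum>i\<in>UNIV. (cmod (x$i))\<^sup>2)"
  unfolding cinner_def of_real_sum
  by (rule sum.cong) (auto simp: complex_mult_cnj cmod_def)
lemma nsq_ge0: "nsq x \<ge> 0"
  unfolding nsq_def cinner_self by (simp add: sum_nonneg)
lemma cinner_self_nsq: "cinner x x = complex_of_real (nsq x)"
  unfolding nsq_def cinner_self by simp
lemma nsq_norm: "nsq x = (norm x)\<^sup>2"
  unfolding nsq_def cinner_self norm_vec_def L2_set_def by (simp add: sum_nonneg)
lemma nsq_eq0: "nsq x = 0 \<Longrightarrow> x = 0"
  by (simp add: nsq_norm)
lemma cinner_axis_right: "cinner x (axis i 1) = x$i"
  by (simp add: cinner_def axis_def if_distrib cong: if_cong)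
lemma cinner_ext: assumes "\<And>v. cinner v a = cinner v b" shows "a = b"
proof -
  have "cnj (a$i) = cnj (b$i)" for i
    using assms[of "axis i 1"] cinner_commute[of "axis i 1" a] cinner_commute[of "axis i 1" b]
    by (metis cinner_axis_right complex_cnj_cnj)
  then show ?thesis by (simp add: vec_eq_iff)
qed
lemma nsq_add: "nsq (x + y) = nsq x + 2 * Re (cinner x y) + nsq y"
proof -
  have "Re (cinner y x) = Re (cinner x y)" by (metis cinner_commute cnj.sel(1))
  then show ?thesis unfolding nsq_def by (simp add: cinner_add_left cinner_add_right)
qed
lemma nsq_diff: "nsq (x - y) = nsq x - 2 * Re (cinner x y) + nsq y"
proof -
  have "Re (cinner y x) = Re (cinner x y)" by (metis cinner_commute cnj.sel(1))
  then show ?thesis unfolding nsq_def by (simp add: cinner_diff_left cinner_diff_right)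
qed
lemma nsq_scale: "nsq (complex_of_real r *s x) = r\<^sup>2 * nsq x"
  unfolding nsq_def by (simp add: cinner_scale_left cinner_scale_right power2_eq_square)
lemma Re_cinner_scale: "Re (cinner (complex_of_real r *s x) (complex_of_real s *s y)) = r * s * Re (cinner x y)"
  by (simp add: cinner_scale_left cinner_scale_right)

lemma herm_of_pos:
  assumes "pos_mat M" shows "herm M"
  unfolding herm_def
proof (intro allI)
  fix x y :: "complex^'a"
  have h: "\<And>z. Im (cinner (M *v z) z) = 0" using assms unfolding pos_mat_def by blast
  define a where "a = cinner (M *v x) y"
  define b where "b = cinner (M *v y) x"
  have "Im (cinner (M *v (x + y)) (x + y)) = 0" by (rule h)
  then have 1: "Im (a + b) = 0"
    using h[of x] h[of y]
    by (simp add: matrix_vector_right_distrib cinner_add_left cinner_add_right a_def b_def)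
  have "Im (cinner (M *v (x + \<i> *s y)) (x + \<i> *s y)) = 0" by (rule h)
  then have 2: "Re b - Re a = 0"
    using h[of x] h[of y]
    by (simp add: matrix_vector_right_distrib cinner_add_left cinner_add_right a_def b_def
        vector_scalar_commute cinner_scale_left cinner_scale_right)
  have "a = cnj b" using 1 2 by (simp add: complex_eq_iff)
  then show "cinner (M *v x) y = cinner x (M *v y)"
    by (simp add: a_def b_def cinner_commute)
qed

lemma pos_re: "pos_mat M \<Longrightarrow> Re (cinner (M *v x) x) \<ge> 0"
  unfolding pos_mat_def by blast

lemma quad_lin_zero:
  fixes N M :: real
  assumes "\<And>s. 2 * s * N + s\<^sup>2 * M \<ge> 0" "M \<ge> 0" shows "N = 0"
proof (rule ccontr)
  assume "N \<noteq> 0"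
  define d where "d = M + 1"
  have d: "d > 0" using assms(2) by (simp add: d_def)
  define s where "s = - N / d"
  have "2 * s * N + s\<^sup>2 * M = N\<^sup>2 * (M - 2 * d) / d\<^sup>2"
    using d unfolding s_def by (simp add: field_simps power2_eq_square)
  moreover have "N\<^sup>2 * (M - 2 * d) / d\<^sup>2 < 0"
    using \<open>N \<noteq> 0\<close> d by (intro divide_neg_pos mult_pos_neg) (auto simp: d_def)
  ultimately show False using assms(1)[of s] by linarith
qed

lemma posdef:
  assumes "pos_mat M" "invertible M" "Re (cinner (M *v y) y) = 0"
  shows "y = 0"
proof -
  have hm: "herm M" by (rule herm_of_pos[OF assms(1)])
  define z where "z = M *v y"
  have "Re (cinner (M *v (y + complex_of_real s *s z)) (y + complex_of_real s *s z)) \<ge> 0" for s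
    by (rule pos_re[OF assms(1)])
  moreover have "cinner (M *v z) y = cinner z z"
    using hm unfolding herm_def z_def by simp
  ultimately have "2 * s * nsq z + s\<^sup>2 * Re (cinner (M *v z) z) \<ge> 0" for s
    using assms(3)[folded z_def]
    by (simp add: matrix_vector_right_distrib cinner_add_left cinner_add_right vector_scalar_commute
        cinner_scale_left cinner_scale_right nsq_def z_def[symmetric] power2_eq_square algebra_simps)
  then have "nsq z = 0" by (rule quad_lin_zero) (rule pos_re[OF assms(1)])
  then have "M *v y = 0" using nsq_eq0 z_def by blast
  then show ?thesis using inj_matrix_vector_mult[OF assms(2)]
    by (metis injD matrix_vector_mult_0_right)
qed

lemma mv_axis: "(a *v axis i 1) $ k = a $ k $ i"
  by (simp add: matrix_vector_mult_def axis_def if_distrib cong: if_cong)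

lemma frob:
  fixes X a :: "complex^'n^'n"
  shows "(\<Sum>i\<in>UNIV. cinner (X *v (a *v axis i 1)) (X *v axis i 1)) =
         (\<Sum>j\<in>UNIV. cinner (a *v (\<chi> i. cnj (X$j$i))) (\<chi> i. cnj (X$j$i)))"
proof -
  have "(\<Sum>i\<in>UNIV. cinner (X *v (a *v axis i 1)) (X *v axis i 1)) =
        (\<Sum>i\<in>UNIV. \<Sum>j\<in>UNIV. \<Sum>k\<in>UNIV. X$j$k * a$k$i * cnj (X$j$i))"
    unfolding cinner_def mv_axis by (simp add: matrix_vector_mult_def[of X] mv_axis sum_distrib_right)
  also have "\<dots> = (\<Sum>j\<in>UNIV. \<Sum>i\<in>UNIV. \<Sum>k\<in>UNIV. X$j$k * a$k$i * cnj (X$j$i))"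
    by (rule sum.swap)
  also have "\<dots> = (\<Sum>j\<in>UNIV. \<Sum>k\<in>UNIV. \<Sum>i\<in>UNIV. X$j$k * a$k$i * cnj (X$j$i))"
    by (rule sum.cong[OF refl], rule sum.swap)
  also have "\<dots> = (\<Sum>j\<in>UNIV. cinner (a *v (\<chi> i. cnj (X$j$i))) (\<chi> i. cnj (X$j$i)))"
    unfolding cinner_def by (simp add: matrix_vector_mult_def sum_distrib_right sum_distrib_left mult_ac)
  finally show ?thesis .
qed

lemma sqrt_unique:
  fixes e a :: "complex^'n^'n"
  assumes pe: "pos_mat e" and ie: "invertible e" and pa: "pos_mat a"
    and sq: "\<And>w. e *v (e *v w) = a *v (a *v w)"
  shows "e = a"
proof -
  define X where "X = e - a"
  have id: "e *v (X *v v) + X *v (a *v v) = 0" for v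
    using sq[of v] by (simp add: X_def matrix_vector_mult_diff_rdistrib matrix_vector_mult_diff_distrib)
  define f where "f i = Re (cinner (e *v (X *v axis i 1)) (X *v axis i 1))" for i
  have f0: "f i \<ge> 0" for i unfolding f_def by (rule pos_re[OF pe])
  have g0: "0 \<le> Re (\<Sum>j\<in>UNIV. cinner (a *v (\<chi> i. cnj (X$j$i))) (\<chi> i. cnj (X$j$i)))"
    unfolding Re_sum by (rule sum_nonneg) (rule pos_re[OF pa])
  have "(\<Sum>i\<in>UNIV. f i) + Re (\<Sum>i\<in>UNIV. cinner (X *v (a *v axis i 1)) (X *v axis i 1)) = 
        Re (\<Sum>i\<in>UNIV. cinner (e *v (X *v axis i 1) + X *v (a *v axis i 1)) (X *v axis i 1))"
    by (simp add: f_def cinner_add_left sum.distrib)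
  also have "\<dots> = 0" by (simp add: id)
  finally have "(\<Sum>i\<in>UNIV. f i) \<le> 0" using g0 frob[of X a] by simp
  then have "(\<Sum>i\<in>UNIV. f i) = 0" using f0 by (meson antisym sum_nonneg)
  then have "f i = 0" for i using f0 by (simp add: sum_nonneg_eq_0_iff)
  then have "X *v axis i 1 = 0" for i
    by (intro posdef[OF pe ie]) (simp add: f_def)
  then have "X = 0"
    by (simp add: vec_eq_iff mv_axis[symmetric])
  then show ?thesis by (simp add: X_def)
qed

lemma l2seq_fin: "(\<And>k. k \<ge> N \<Longrightarrow> x k = 0) \<Longrightarrow> l2seq x"
  unfolding l2seq_def by (rule summable_finite[of "{..<N}"]) auto

lemma l2inner_fin2: "(\<And>k. k \<ge> N \<Longrightarrow> y k = 0) \<Longrightarrow> l2inner x y = (\<Sum>k<N. cinner (x k) (y k))"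
  unfolding l2inner_def by (rule suminf_finite) auto

lemma l2inner_fin1: "(\<And>k. k \<ge> N \<Longrightarrow> x k = 0) \<Longrightarrow> l2inner x y = (\<Sum>k<N. cinner (x k) (y k))"
  unfolding l2inner_def by (rule suminf_finite) auto

lemma l2inner_self_ge:
  assumes "l2seq x" "finite K"
  shows "(\<Sum>k\<in>K. nsq (x k)) \<le> Re (l2inner x x)"
proof -
  have sm: "summable (\<lambda>n. nsq (x n))" using assms(1) unfolding l2seq_def nsq_norm .
  have "l2inner x x = complex_of_real (\<Sum>n. nsq (x n))"
    unfolding l2inner_def cinner_self_nsq using suminf_of_real[OF sm] by (metis (no_types))
  moreover have "(\<Sum>k\<in>K. nsq (x k)) \<le> (\<Sum>n. nsq (x n))"
    by (rule sum_le_suminf[OF sm assms(2)]) (simp add: nsq_ge0)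
  ultimately show ?thesis by simp
qed

lemma hyp_ineq:
  fixes A :: "nat \<Rightarrow> complex^'p^'p" and t :: real and x :: "nat \<Rightarrow> complex^'p"
  assumes herm: "\<And>k. herm (A k)"
   and hy: "hyponormal (\<lambda>x n. mshift A x n + complex_of_real t *s mshift A (mshift A x) n)"
   and fin: "\<And>k. k \<ge> N \<Longrightarrow> x k = 0"
   and K: "finite K"
  shows "(\<Sum>k\<in>K. nsq (A k *v x (Suc k) + complex_of_real t *s (A k *v (A (Suc k) *v x (Suc (Suc k)))))) 
         \<le> (\<Sum>j<N+2. nsq (mshift A x j + complex_of_real t *s mshift A (mshift A x) j))"
proof -
  define c where "c = complex_of_real t"
  define T where "T = (\<lambda>(x::nat \<Rightarrow> complex^'p) n. mshift A x n + c *s mshift A (mshift A x) n)"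
  have cc: "cnj c = c" by (simp add: c_def)
  obtain S where Tl2: "\<And>x. l2seq x \<Longrightarrow> l2seq (T x)" and adj: "is_adjoint T S"
    and pos: "\<And>x. l2seq x \<Longrightarrow> 0 \<le> Re (l2inner (\<lambda>n. S (T x) n - T (S x) n) x)"
    using hy unfolding hyponormal_def T_def c_def Let_def by blast
  have Sl2: "\<And>x. l2seq x \<Longrightarrow> l2seq (S x)" and adjeq: "\<And>x y. l2seq x \<Longrightarrow> l2seq y \<Longrightarrow> l2inner (T x) y = l2inner x (S y)"
    using adj unfolding is_adjoint_def by blast+
  have lx: "l2seq x" by (rule l2seq_fin[OF fin])
  define G where "G k = A k *v x (Suc k) + c *s (A k *v (A (Suc k) *v x (Suc (Suc k))))" for k
  have SxG: "S x k = G k" for k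
  proof (rule cinner_ext)
    fix v
    define d where "d = (\<lambda>j. if j = k then v else (0::complex^'p))"
    have ld: "l2seq d" by (rule l2seq_fin[of "Suc k"]) (simp add: d_def)
    have "cinner v (S x k) = l2inner d (S x)"
      unfolding l2inner_def by (subst suminf_finite[of "{k}"]) (auto simp: d_def)
    also have "\<dots> = l2inner (T d) x" using adjeq[OF ld lx] by simp
    also have "T d = (\<lambda>j. (if j = Suc k then A k *v v else 0) + c *s (if j = Suc (Suc k) then A (Suc k) *v (A k *v v) else 0))"
      by (rule ext) (auto simp: T_def mshift_def d_def)
    also have "l2inner \<dots> x = cinner (A k *v v) (x (Suc k)) + cinner (c *s (A (Suc k) *v (A k *v v))) (x (Suc (Suc k)))"
      unfolding l2inner_def by (subst suminf_finite[of "{Suc k, Suc (Suc k)}"]) (auto simp: cinner_add_left)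
    also have "\<dots> = cinner v (G k)"
      using herm unfolding herm_def G_def
      by (simp add: cinner_add_right cinner_scale_left cinner_scale_right cc)
    finally show "cinner v (S x k) = cinner v (G k)" .
  qed
  have Tfin: "T x j = 0" if "j \<ge> N + 2" for j
  proof -
    have "mshift A x j = 0" using that fin by (auto simp: mshift_def)
    moreover have "mshift A (mshift A x) j = 0" using that fin by (auto simp: mshift_def)
    ultimately show ?thesis by (simp add: T_def)
  qed
  have lTx: "l2seq (T x)" by (rule Tl2[OF lx])
  have lSx: "l2seq (S x)" by (rule Sl2[OF lx])
  define q where "q = l2inner (\<lambda>n. S (T x) n - T (S x) n) x"
  have "q = (\<Sum>n<N. cinner (S (T x) n - T (S x) n) (x n))"
    unfolding q_def by (rule l2inner_fin2[OF fin])
  also have "\<dots> = (\<Sum>n<N. cinner (S (T x) n) (x n)) - (\<Sum>n<N. cinner (T (S x) n) (x n))"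
    by (simp add: cinner_diff_left sum_subtractf)
  also have "(\<Sum>n<N. cinner (S (T x) n) (x n)) = cnj (\<Sum>n<N. cinner (x n) (S (T x) n))"
    by (simp add: cinner_commute)
  also have "(\<Sum>n<N. cinner (x n) (S (T x) n)) = l2inner x (S (T x))"
    by (rule l2inner_fin1[OF fin, symmetric])
  also have "\<dots> = l2inner (T x) (T x)" using adjeq[OF lx lTx] by simp
  also have "\<dots> = (\<Sum>n<N+2. cinner (T x n) (T x n))" by (rule l2inner_fin1) (rule Tfin)
  also have "(\<Sum>n<N. cinner (T (S x) n) (x n)) = l2inner (T (S x)) x"
    by (rule l2inner_fin2[OF fin, symmetric])
  also have "\<dots> = l2inner (S x) (S x)" using adjeq[OF lSx lx] by simp
  finally have qeq: "Re q = (\<Sum>n<N+2. nsq (T x n)) - Re (l2inner (S x) (S x))"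
    by (simp add: nsq_def)
  have "0 \<le> Re q" unfolding q_def by (rule pos[OF lx])
  moreover have "(\<Sum>k\<in>K. nsq (S x k)) \<le> Re (l2inner (S x) (S x))"
    by (rule l2inner_self_ge[OF lSx K])
  ultimately show ?thesis using qeq unfolding SxG G_def T_def c_def by simp
qed

lemma mv_neg[simp]: "(M::complex^'n^'m) *v (- x) = - (M *v x)"
  by (simp add: matrix_vector_mult_def vec_eq_iff sum_negf)

lemma step_values:
  fixes A :: "nat \<Rightarrow> complex^'p^'p" and t :: real and p w u q :: "complex^'p"
  assumes a1: "A (Suc m) = a" and a2: "A (Suc (Suc m)) = a" and bb: "A m = b"
    and ee: "A (Suc (Suc (Suc m))) = e" and ff: "A (Suc (Suc (Suc (Suc m)))) = f"
    and gg: "A (Suc (Suc (Suc (Suc (Suc m))))) = g"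
    and ww: "w = a *v u" and qq: "q = e *v w"
  defines "x \<equiv> (\<lambda>k. if k = m then complex_of_real (t^2) *s p else if k = Suc m then complex_of_real (-t) *s w
      else if k = Suc (Suc m) then u else if k = Suc (Suc (Suc m)) then complex_of_real (-t) *s w
      else if k = Suc (Suc (Suc (Suc m))) then complex_of_real (t^2) *s q else 0)"
  defines "Tc \<equiv> (\<lambda>j. mshift A x j + complex_of_real t *s mshift A (mshift A x) j)"
  shows "Tc (Suc m) = complex_of_real (t^2) *s (b *v p)"
    and "Tc (Suc (Suc m)) = complex_of_real (-t) *s (a *v w) + complex_of_real (t^3) *s (a *v (b *v p))"
    and "Tc (Suc (Suc (Suc m))) = a *v u - complex_of_real (t^2) *s (a *v (a *v w))"
    and "Tc (Suc (Suc (Suc (Suc m)))) = 0"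
    and "Tc (Suc (Suc (Suc (Suc (Suc m))))) = 0"
    and "Tc (Suc (Suc (Suc (Suc (Suc (Suc m)))))) = complex_of_real (t^3) *s (g *v (f *v q))"
    and "j \<le> m \<Longrightarrow> Tc j = 0"
proof -
  show "Tc (Suc m) = complex_of_real (t^2) *s (b *v p)"
    using bb by (cases m) (simp_all add: Tc_def x_def mshift_def vector_scalar_commute)
  show "Tc (Suc (Suc m)) = complex_of_real (-t) *s (a *v w) + complex_of_real (t^3) *s (a *v (b *v p))"
    by (simp add: Tc_def x_def mshift_def bb a1 vector_scalar_commute power3_eq_cube power2_eq_square mult_ac)
  show "Tc (Suc (Suc (Suc m))) = a *v u - complex_of_real (t^2) *s (a *v (a *v w))"
    by (simp add: Tc_def x_def mshift_def a1 a2 vector_scalar_commute power2_eq_square)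
  show "Tc (Suc (Suc (Suc (Suc m)))) = 0"
    by (simp add: Tc_def x_def mshift_def a2 ee ww vector_scalar_commute)
  show "Tc (Suc (Suc (Suc (Suc (Suc m))))) = 0"
    by (simp add: Tc_def x_def mshift_def ff ee qq vector_scalar_commute power2_eq_square)
  show "Tc (Suc (Suc (Suc (Suc (Suc (Suc m)))))) = complex_of_real (t^3) *s (g *v (f *v q))"
    by (simp add: Tc_def x_def mshift_def ff gg vector_scalar_commute power3_eq_cube power2_eq_square mult_ac)
  show "j \<le> m \<Longrightarrow> Tc j = 0"
    unfolding Tc_def x_def mshift_def by (auto; linarith)
qed

lemma inv_right: "invertible M \<Longrightarrow> M *v (matrix_inv M *v v) = v"
proof -
  assume "invertible M"
  then have "M ** matrix_inv M = mat 1"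
    unfolding invertible_def matrix_inv_def by (rule someI_ex[THEN conjunct1])
  then show ?thesis by (simp add: matrix_vector_mul_assoc)
qed

lemma nsq_zero[simp]: "nsq 0 = 0" by (simp add: nsq_def)

lemma real_t4:
  fixes D K :: real
  assumes "\<And>t. t^4 * D \<le> t^6 * K" shows "D \<le> 0"
proof (rule ccontr)
  assume "\<not> D \<le> 0"
  then have D: "D > 0" by simp
  define s where "s = D / (\<bar>K\<bar> + 1)"
  have s0: "s > 0" using D by (simp add: s_def)
  define t where "t = sqrt s"
  have t2: "t^2 = s" using s0 by (simp add: t_def)
  have "t^4 * D \<le> t^6 * K" by (rule assms)
  moreover have "t^4 = t^2 * t^2" "t^6 = t^2 * t^2 * t^2" by (simp_all flip: power_add)
  ultimately have "s^2 * D \<le> s^3 * K" using t2 by (simp add: power2_eq_square power3_eq_cube)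
  then have "s^2 * D \<le> s^2 * (s * K)" by (simp add: power3_eq_cube power2_eq_square mult_ac)
  then have "D \<le> s * K" using s0 by simp
  moreover have "s * K < D"
  proof -
    have "s * K \<le> s * \<bar>K\<bar>" using s0 by (simp add: mult_left_mono)
    also have "\<dots> < s * (\<bar>K\<bar> + 1)" using s0 by simp
    also have "\<dots> = D" by (simp add: s_def)
    finally show ?thesis .
  qed
  ultimately show False by simp
qed



lemma nsq_scale_pow: "nsq ((complex_of_real r)^k *s x) = (r^k)\<^sup>2 * nsq x"
  by (metis nsq_scale of_real_power)

lemma nsq_comb: "nsq (complex_of_real (- t) *s al + complex_of_real (t ^ 3) *s be) =
   t^2 * nsq al - 2 * t^4 * Re (cinner al be) + t^6 * nsq be"
proof -
  have "nsq (complex_of_real (- t) *s al + complex_of_real (t ^ 3) *s be) =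
     (- t)\<^sup>2 * nsq al + 2 * ((- t) * t^3 * Re (cinner al be)) + (t^3)\<^sup>2 * nsq be"
    by (simp only: nsq_add nsq_scale Re_cinner_scale)
  also have "\<dots> = t^2 * nsq al - 2 * t^4 * Re (cinner al be) + t^6 * nsq be"
    by (simp add: power2_eq_square power3_eq_cube) (simp add: power_def)
  finally show ?thesis .
qed

lemma Re_cinner_sym: "Re (cinner x y) = Re (cinner y x)"
  by (metis cinner_commute cnj.sel(1))

lemma step_core:
  fixes A :: "nat \<Rightarrow> complex^'p^'p" and u :: "complex^'p"
  assumes pos: "\<And>n. pos_mat (A n)" and inv: "\<And>n. invertible (A n)"
    and qh: "quad_hyponormal (mshift A)"
    and eq: "A (Suc m) = A (Suc (Suc m))"
  defines "a \<equiv> A (Suc m)" and "b \<equiv> A m" and "e \<equiv> A (Suc (Suc (Suc m)))"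
  defines "w \<equiv> a *v u"
  defines "p \<equiv> matrix_inv b *v (a *v (a *v w))"
  defines "Y0 \<equiv> (if m = 0 then 0 else nsq (A (m - 1) *v (p - b *v w)))"
  shows "Y0 + nsq (e *v (e *v w) - a *v (a *v w)) \<le> 0"
proof -
  have herm: "\<And>k. herm (A k)" by (rule herm_of_pos[OF pos])
  define f where "f = A (Suc (Suc (Suc (Suc m))))"
  define g where "g = A (Suc (Suc (Suc (Suc (Suc m)))))"
  define q where "q = e *v w"
  have bp: "b *v p = a *v (a *v w)" unfolding p_def b_def by (rule inv_right[OF inv])
  define D where "D = Y0 + nsq (e *v (e *v w) - a *v (a *v w))"
  define K where "K = nsq (a *v (b *v p)) + nsq (g *v (f *v q)) - nsq (a *v (e *v q))"
  have "t^4 * D \<le> t^6 * K" for t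
  proof -
    define x where "x \<equiv> (\<lambda>k. if k = m then complex_of_real (t^2) *s p else if k = Suc m then complex_of_real (-t) *s w
      else if k = Suc (Suc m) then u else if k = Suc (Suc (Suc m)) then complex_of_real (-t) *s w
      else if k = Suc (Suc (Suc (Suc m))) then complex_of_real (t^2) *s q else 0)"
    define Tc where "Tc \<equiv> (\<lambda>j. mshift A x j + complex_of_real t *s mshift A (mshift A x) j)"
    have h1: "A (Suc m) = a" "A (Suc (Suc m)) = a" "A m = b" "A (Suc (Suc (Suc m))) = e" "w = a *v u"
      using eq by (simp_all add: a_def b_def e_def w_def)
    note V = step_values[where t = t and p = p, OF h1(1-4) f_def[symmetric] g_def[symmetric] h1(5) q_def, folded x_def, folded Tc_def]
    have hy: "hyponormal (\<lambda>x n. mshift A x n + complex_of_real t *s mshift A (mshift A x) n)"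
      using qh unfolding quad_hyponormal_def by blast
    define L where "L = (if m = 0 then {} else {m - 1})"
    define KK where "KK = L \<union> {Suc m, Suc (Suc m), Suc (Suc (Suc m))}"
    have fin: "\<And>k. k \<ge> m + 5 \<Longrightarrow> x k = 0" by (simp add: x_def)
    have finKK: "finite KK" by (simp add: KK_def L_def)
    define F where "F j = nsq (mshift A x j + complex_of_real t *s mshift A (mshift A x) j)" for j
    define G where "G k = nsq (A k *v x (Suc k) + complex_of_real t *s (A k *v (A (Suc k) *v x (Suc (Suc k)))))" for k
    have HI: "(\<Sum>k\<in>KK. G k) \<le> (\<Sum>j<m+5+2. F j)"
      unfolding F_def G_def by (rule hyp_ineq[OF herm hy fin finKK])
    have "m + 5 + 2 = Suc (Suc (Suc (Suc (Suc (Suc (Suc m))))))" by simp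
    then have "(\<Sum>j<m+5+2. F j) = (\<Sum>j<Suc m. F j) + F (Suc m) + F (Suc (Suc m)) + F (Suc (Suc (Suc m)))
       + F (Suc (Suc (Suc (Suc m)))) + F (Suc (Suc (Suc (Suc (Suc m))))) + F (Suc (Suc (Suc (Suc (Suc (Suc m))))))"
      by (simp only: sum.lessThan_Suc)
    also have "(\<Sum>j<Suc m. F j) = 0" by (rule sum.neutral) (simp add: F_def V(7))
    finally have R: "(\<Sum>j<m+5+2. F j) = nsq (complex_of_real (t\<^sup>2) *s (b *v p)) 
        + nsq (complex_of_real (- t) *s (a *v w) + complex_of_real (t ^ 3) *s (a *v (b *v p)))
        + nsq (a *v u - complex_of_real (t\<^sup>2) *s (a *v (a *v w)))
        + nsq (complex_of_real (t ^ 3) *s (g *v (f *v q)))"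
      by (simp add: F_def V(1-6))
    have G1: "G (Suc m) = nsq (a *v u - complex_of_real (t\<^sup>2) *s (a *v (a *v w)))"
      by (simp add: G_def x_def h1 vector_scalar_commute power2_eq_square)
    have G2: "G (Suc (Suc m)) = nsq (complex_of_real (- t) *s (a *v w) + complex_of_real (t ^ 3) *s (a *v (e *v q)))"
      by (simp add: G_def x_def h1 vector_scalar_commute power3_eq_cube power2_eq_square mult_ac)
    have G3: "G (Suc (Suc (Suc m))) = nsq (complex_of_real (t\<^sup>2) *s (e *v q))"
      by (simp add: G_def x_def h1 vector_scalar_commute)
    have GL: "(\<Sum>k\<in>L. G k) = t^4 * Y0"
    proof (cases "m = 0")
      case True then show ?thesis by (simp add: L_def Y0_def)
    next
      case False
      then have sm: "Suc (m - 1) = m" "Suc (Suc (m - 1)) = Suc m" by simp_all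
      have "G (m - 1) = nsq (complex_of_real (t^2) *s (A (m - 1) *v (p - b *v w)))"
        unfolding G_def sm using False
        by (simp add: x_def h1 vector_scalar_commute matrix_vector_mult_diff_distrib power2_eq_square
            algebra_simps scalar_mult_eq_scaleR)
      then show ?thesis using False by (simp add: L_def Y0_def nsq_scale_pow flip: power_mult)
    qed
    have "(\<Sum>k\<in>KK. G k) = (\<Sum>k\<in>L. G k) + G (Suc m) + G (Suc (Suc m)) + G (Suc (Suc (Suc m)))"
      unfolding KK_def by (subst sum.union_disjoint) (auto simp: L_def)
    note KKs = this
    have ha: "herm a" unfolding a_def by (rule herm)
    have c1: "Re (cinner (a *v w) (a *v (e *v q))) = Re (cinner (a *v (a *v w)) (e *v (e *v w)))"
      using ha unfolding herm_def q_def by metis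
    have c2: "Re (cinner (a *v w) (a *v (b *v p))) = nsq (a *v (a *v w))"
      using ha unfolding herm_def nsq_def bp by metis
    have n1: "nsq (complex_of_real (t\<^sup>2) *s (b *v p)) = t^4 * nsq (a *v (a *v w))"
      by (simp only: nsq_scale bp) (simp flip: power_mult)
    have n2: "nsq (complex_of_real (t\<^sup>2) *s (e *v q)) = t^4 * nsq (e *v (e *v w))"
      by (simp only: nsq_scale q_def) (simp flip: power_mult)
    have n3: "nsq (complex_of_real (t ^ 3) *s (g *v (f *v q))) = t^6 * nsq (g *v (f *v q))"
      by (simp only: nsq_scale) (simp flip: power_mult)
    have dd: "nsq (e *v (e *v w) - a *v (a *v w)) = nsq (e *v (e *v w)) - 2 * Re (cinner (a *v (a *v w)) (e *v (e *v w))) + nsq (a *v (a *v w))"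
      by (simp add: nsq_diff Re_cinner_sym)
    have "t^4 * Y0 + nsq (a *v u - complex_of_real (t\<^sup>2) *s (a *v (a *v w)))
       + (t^2 * nsq (a *v w) - 2 * t^4 * Re (cinner (a *v w) (a *v (e *v q))) + t^6 * nsq (a *v (e *v q)))
       + t^4 * nsq (e *v (e *v w))
       \<le> t^4 * nsq (a *v (a *v w)) + (t^2 * nsq (a *v w) - 2 * t^4 * Re (cinner (a *v w) (a *v (b *v p))) + t^6 * nsq (a *v (b *v p)))
       + nsq (a *v u - complex_of_real (t\<^sup>2) *s (a *v (a *v w))) + t^6 * nsq (g *v (f *v q))"
      using HI unfolding KKs GL G1 G2 G3 R nsq_comb n1 n2 n3 .
    then show ?thesis unfolding c1 c2 D_def K_def dd by (simp add: algebra_simps)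
  qed
  then have "D \<le> 0" by (rule real_t4)
  then show ?thesis by (simp add: D_def)
qed


lemma step_both:
  fixes A :: "nat \<Rightarrow> complex^'p^'p"
  assumes pos: "\<And>n. pos_mat (A n)" and inv: "\<And>n. invertible (A n)"
    and qh: "quad_hyponormal (mshift A)"
    and eq: "A (Suc m) = A (Suc (Suc m))"
  shows "A (Suc (Suc (Suc m))) = A (Suc (Suc m))" and "m \<noteq> 0 \<Longrightarrow> A m = A (Suc m)"
proof -
  define a where "a = A (Suc m)"
  define b where "b = A m"
  define e where "e = A (Suc (Suc (Suc m)))"
  have H: "(if m = 0 then 0 else nsq (A (m - 1) *v (matrix_inv b *v (a *v (a *v (a *v u))) - b *v (a *v u))))
      + nsq (e *v (e *v (a *v u)) - a *v (a *v (a *v u))) \<le> 0" for u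
    using step_core[OF pos inv qh eq, of u] unfolding a_def b_def e_def .
  have Y: "(if m = 0 then 0 else nsq (A (m - 1) *v (matrix_inv b *v (a *v (a *v (a *v u))) - b *v (a *v u)))) = 0"
     and E: "nsq (e *v (e *v (a *v u)) - a *v (a *v (a *v u))) = 0" for u
    using H[of u] nsq_ge0[of "e *v (e *v (a *v u)) - a *v (a *v (a *v u))"]
      nsq_ge0[of "A (m - 1) *v (matrix_inv b *v (a *v (a *v (a *v u))) - b *v (a *v u))"]
    by (auto split: if_splits)
  have surj: "a *v (matrix_inv a *v v) = v" for v unfolding a_def by (rule inv_right[OF inv])
  have "e *v (e *v v) = a *v (a *v v)" for v
    using nsq_eq0[OF E[of "matrix_inv a *v v"]] surj[of v] by simp
  then have "e = a" by (rule sqrt_unique[OF pos[of "Suc (Suc (Suc m))", folded e_def] inv[of "Suc (Suc (Suc m))", folded e_def] pos[of "Suc m", folded a_def]])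
  then show "A (Suc (Suc (Suc m))) = A (Suc (Suc m))" using eq by (simp add: e_def a_def)
  assume m0: "m \<noteq> 0"
  have "b *v (b *v v) = a *v (a *v v)" for v
  proof -
    define u where "u = matrix_inv a *v v"
    have au: "a *v u = v" unfolding u_def by (rule surj)
    have "A (m - 1) *v (matrix_inv b *v (a *v (a *v v)) - b *v v) = 0"
      using nsq_eq0 Y[of u] m0 au by simp
    then have "matrix_inv b *v (a *v (a *v v)) - b *v v = 0"
      using inj_matrix_vector_mult[OF inv[of "m - 1"]] by (metis injD matrix_vector_mult_0_right)
    then have "b *v (matrix_inv b *v (a *v (a *v v))) = b *v (b *v v)" by simp
    then show ?thesis unfolding b_def using inv_right[OF inv[of m]] by (simp add: b_def)
  qed
  then have "b = a" by (rule sqrt_unique[OF pos[of m, folded b_def] inv[of m, folded b_def] pos[of "Suc m", folded a_def]])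
  then show "A m = A (Suc m)" by (simp add: a_def b_def)
qed

theorem mainTheorem7:
  fixes A :: "nat \<Rightarrow> complex^'p^'p"
  assumes pos: "\<And>n. pos_mat (A n)"
    and inv: "\<And>n. invertible (A n)"
    and bdd: "\<exists>B. \<forall>n. onorm (\<lambda>v. A n *v v) \<le> B"
    and qh: "quad_hyponormal (mshift A)"
    and eq: "\<exists>n\<ge>1. A n = A (Suc n)"
  shows "\<forall>k\<ge>1. A k = A 1"
proof -
  obtain n where n1: "n \<ge> 1" and en: "A n = A (Suc n)" using eq by blast
  note S = step_both[OF pos inv qh]
  have fw: "A (n + j) = A n \<and> A (Suc (n + j)) = A n" for j
  proof (induction j)
    case 0 then show ?case using en by simp
  next
    case (Suc j)
    define m where "m = n + j - 1"
    have sm: "Suc m = n + j" using n1 by (simp add: m_def)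
    have "A (Suc m) = A (Suc (Suc m))" using Suc.IH sm by simp
    then have "A (Suc (Suc (Suc m))) = A (Suc (Suc m))" by (rule S(1))
    then show ?case using Suc.IH sm by simp
  qed
  have bw: "i < n \<Longrightarrow> A (n - i) = A n \<and> A (Suc (n - i)) = A n" for i
  proof (induction i)
    case 0 then show ?case using en by simp
  next
    case (Suc i)
    define m where "m = n - Suc i"
    have sm: "Suc m = n - i" "m \<noteq> 0" using Suc.prems by (simp_all add: m_def)
    have "A (Suc m) = A (Suc (Suc m))" using Suc.IH Suc.prems sm by simp
    then have "A m = A (Suc m)" by (rule S(2)) (rule sm(2))
    then show ?case using Suc.IH Suc.prems sm by (simp add: m_def)
  qed
  have all: "A k = A n" if "k \<ge> 1" for k
  proof (cases "k \<ge> n")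
    case True
    then show ?thesis using fw[of "k - n"] by simp
  next
    case False
    then show ?thesis using bw[of "n - k"] that by simp
  qed
  show ?thesis using all[of 1] all by simp
qed

end
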